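(* Let $E$ be an Archimedean vector lattice and let $F$ be an order dense vector sublattice of $E$. Suppose $F$ has the countable sup property. Then $E$ has the countable sup property in each of the following cases: (a) $F$ is majorizing in $E$; (b) $F$ has a weak unit.
   Context: A sublattice $F$ of $E$ is order dense if for every $x\in E$ with $x>0$ there is $y\in F$ with $0<y\le x$; it is majorizing if for every $x\in E$ there is $y\in F$ with $x\le y$. A vector $e\ge 0$ in $F$ is a weak unit of $F$ if $|x|\wedge e=0$, $x\in F$, implies $x=0$. A vector lattice has the countable sup property if every nonempty subset possessing a supremum contains a countable subset with the same supremum. *)

theory Defs
  imports Complex_Main "HOL-Library.Countable_Set"
begin

class vector_lattice = ordered_real_vector + lattice

definition vl_abs :: "'a::vector_lattice \<Rightarrow> 'a" where
  "vl_abs x = sup x (- x)"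

definition archimedean_vl :: "'a::vector_lattice itself \<Rightarrow> bool" where
  "archimedean_vl _ \<longleftrightarrow>
     (\<forall>x y :: 'a. 0 \<le> x \<and> 0 \<le> y \<and> (\<forall>n::nat. real n *\<^sub>R x \<le> y) \<longrightarrow> x = 0)"

definition vector_sublattice :: "'a::vector_lattice set \<Rightarrow> bool" where
  "vector_sublattice F \<longleftrightarrow> subspace F \<and>
     (\<forall>x\<in>F. \<forall>y\<in>F. sup x y \<in> F \<and> inf x y \<in> F)"

definition order_dense :: "'a::vector_lattice set \<Rightarrow> bool" where
  "order_dense F \<longleftrightarrow> (\<forall>x. 0 < x \<longrightarrow> (\<exists>y\<in>F. 0 < y \<and> y \<le> x))"

definition majorizing :: "'a::vector_lattice set \<Rightarrow> bool" where
  "majorizing F \<longleftrightarrow> (\<forall>x. \<exists>y\<in>F. x \<le> y)"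

text \<open>Weak unit of the vector lattice F (disjointness computed in F, equivalently in E
  since F is a sublattice).\<close>
definition weak_unit_of :: "'a::vector_lattice set \<Rightarrow> 'a \<Rightarrow> bool" where
  "weak_unit_of F e \<longleftrightarrow> e \<in> F \<and> 0 \<le> e \<and>
     (\<forall>x\<in>F. inf (vl_abs x) e = 0 \<longrightarrow> x = 0)"

definition is_sup_in :: "'a::order set \<Rightarrow> 'a set \<Rightarrow> 'a \<Rightarrow> bool" where
  "is_sup_in S A s \<longleftrightarrow> s \<in> S \<and> (\<forall>a\<in>A. a \<le> s) \<and>
     (\<forall>u\<in>S. (\<forall>a\<in>A. a \<le> u) \<longrightarrow> s \<le> u)"

definition countable_sup_property :: "'a::order set \<Rightarrow> bool" where
  "countable_sup_property S \<longleftrightarrow>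
     (\<forall>A s. A \<subseteq> S \<and> A \<noteq> {} \<and> is_sup_in S A s \<longrightarrow>
        (\<exists>B\<subseteq>A. countable B \<and> is_sup_in S B s))"

end

theory Submission
  imports Defs
begin

lemma sub0: "subspace F \<Longrightarrow> (0::'a::real_vector) \<in> F"
  by (rule real_vector.subspace_0)
lemma subadd: "subspace F \<Longrightarrow> x \<in> F \<Longrightarrow> y \<in> F \<Longrightarrow> (x::'a::real_vector) + y \<in> F"
  by (rule real_vector.subspace_add)
lemma subdiff: "subspace F \<Longrightarrow> x \<in> F \<Longrightarrow> y \<in> F \<Longrightarrow> (x::'a::real_vector) - y \<in> F"
  by (rule real_vector.subspace_diff)
lemma subneg: "subspace F \<Longrightarrow> x \<in> F \<Longrightarrow> - (x::'a::real_vector) \<in> F"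
  by (rule real_vector.subspace_neg)
lemma subscale: "subspace F \<Longrightarrow> x \<in> F \<Longrightarrow> c *\<^sub>R (x::'a::real_vector) \<in> F"
  by (simp add: real_vector.subspace_scale)

lemma sup_lemma:
  fixes F :: "'a::vector_lattice set"
  assumes arch: "archimedean_vl TYPE('a)" and sub: "subspace F" and od: "order_dense F"
    and x0: "0 \<le> x" and ub: "\<And>z. z \<in> F \<Longrightarrow> 0 \<le> z \<Longrightarrow> z \<le> x \<Longrightarrow> z \<le> u"
  shows "x \<le> u"
proof (rule ccontr)
  assume nle: "\<not> x \<le> u"
  define u' where "u' = inf u x"
  have "u' \<le> x" unfolding u'_def by simp
  moreover have "u' \<noteq> x" using nle unfolding u'_def by (metis inf.cobounded1)
  ultimately have "0 < x - u'" by simp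
  then obtain y where y: "y \<in> F" "0 < y" "y \<le> x - u'" using od unfolding order_dense_def by blast
  have key: "real n *\<^sub>R y \<in> F \<and> 0 \<le> real n *\<^sub>R y \<and> real n *\<^sub>R y \<le> x" for n
  proof (induction n)
    case 0 then show ?case using sub0[OF sub] x0 by simp
  next
    case (Suc n)
    let ?z = "real n *\<^sub>R y"
    have "?z \<le> u" using ub Suc by blast
    then have "?z \<le> u'" unfolding u'_def using Suc by simp
    then have "?z + y \<le> u' + (x - u')" using y(3) by (rule add_mono)
    moreover have "real (Suc n) *\<^sub>R y = ?z + y" by (simp add: algebra_simps)
    moreover have "0 \<le> ?z + y" using Suc y(2) by simp
    ultimately show ?case using subadd[OF sub] Suc y(1) by simp
  qed
  have "y = 0" using arch key y(2) x0 unfolding archimedean_vl_def by (meson less_imp_le)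
  then show False using y(2) by simp
qed

lemma regular:
  fixes F :: "'a::vector_lattice set"
  assumes sub: "subspace F" and od: "order_dense F"
    and s: "is_sup_in F B s"
  shows "is_sup_in UNIV B s"
  unfolding is_sup_in_def
proof (intro conjI ballI allI impI)
  show "s \<in> UNIV" by simp
  fix b assume "b \<in> B" then show "b \<le> s" using s unfolding is_sup_in_def by blast
next
  fix u assume ub: "\<forall>a\<in>B. a \<le> u"
  show "s \<le> u"
  proof (rule ccontr)
    assume nle: "\<not> s \<le> u"
    define m where "m = inf s u"
    have "m \<le> s" unfolding m_def by simp
    moreover have "m \<noteq> s" using nle unfolding m_def by (metis inf.cobounded2)
    ultimately have "0 < s - m" by simp
    then obtain y where y: "y \<in> F" "0 < y" "y \<le> s - m" using od unfolding order_dense_def by blast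
    have sF: "s \<in> F" using s unfolding is_sup_in_def by blast
    have "s - y \<in> F" using subdiff[OF sub sF y(1)] .
    moreover have "\<forall>b\<in>B. b \<le> s - y"
    proof
      fix b assume b: "b \<in> B"
      have "b \<le> m" unfolding m_def using b ub s unfolding is_sup_in_def by simp
      also have "m \<le> s - y" using y(3) by (simp add: le_diff_eq add.commute)
      finally show "b \<le> s - y" .
    qed
    ultimately have "s \<le> s - y" using s unfolding is_sup_in_def by blast
    then show False using y(2) by simp
  qed
qed

lemma dense_below:
  fixes F :: "'a::vector_lattice set"
  assumes arch: "archimedean_vl TYPE('a)" and sub: "subspace F" and od: "order_dense F"
    and f: "f \<in> F" "c \<le> f" and lb: "\<And>y. y \<in> F \<Longrightarrow> c \<le> y \<Longrightarrow> l \<le> y"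
  shows "l \<le> c"
proof -
  have "f - c \<le> f - l"
  proof (rule sup_lemma[OF arch sub od])
    show "0 \<le> f - c" using f by simp
    fix z assume z: "z \<in> F" "0 \<le> z" "z \<le> f - c"
    have "f - z \<in> F" using subdiff[OF sub f(1) z(1)] .
    moreover have "c \<le> f - z" using z(3) by (simp add: le_diff_eq add.commute)
    ultimately have "l \<le> f - z" using lb by blast
    then show "z \<le> f - l" by (simp add: le_diff_eq add.commute)
  qed
  then show ?thesis by simp
qed

lemma lemL:
  fixes F :: "'a::vector_lattice set"
  assumes arch: "archimedean_vl TYPE('a)" and sub: "subspace F" and od: "order_dense F"
    and csp: "countable_sup_property F"
    and pos: "\<And>c. c \<in> C \<Longrightarrow> 0 \<le> c"
    and maj: "\<And>c. c \<in> C \<Longrightarrow> \<exists>f\<in>F. c \<le> f"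
    and inf0: "\<And>l. (\<forall>c\<in>C. l \<le> c) \<Longrightarrow> l \<le> 0"
  shows "\<exists>C0\<subseteq>C. countable C0 \<and> (\<forall>l. (\<forall>c\<in>C0. l \<le> c) \<longrightarrow> l \<le> 0)"
proof (cases "C = {}")
  case True then show ?thesis using inf0 by blast
next
  case False
  define D where "D = {y\<in>F. \<exists>c\<in>C. c \<le> y}"
  have Dlb: "l \<le> 0" if "\<forall>d\<in>D. l \<le> d" for l
  proof (rule inf0, intro ballI)
    fix c assume c: "c \<in> C"
    obtain f where "f \<in> F" "c \<le> f" using maj c by blast
    then show "l \<le> c"
      by (rule dense_below[OF arch sub od]) (use that c in \<open>auto simp: D_def\<close>)
  qed
  have D0: "\<And>d. d \<in> D \<Longrightarrow> 0 \<le> d" unfolding D_def using pos by (blast intro: order_trans)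
  have DF: "D \<subseteq> F" unfolding D_def by blast
  have Dne: "D \<noteq> {}" using False maj unfolding D_def by blast
  have sup1: "is_sup_in F (uminus ` D) 0"
    unfolding is_sup_in_def
  proof (intro conjI ballI impI)
    show "0 \<in> F" using sub0[OF sub] .
    fix a assume "a \<in> uminus ` D" then show "a \<le> 0" using D0 by auto
  next
    fix u assume "u \<in> F" "\<forall>a\<in>uminus ` D. a \<le> u"
    then have "\<forall>d\<in>D. - u \<le> d" by (auto simp: minus_le_iff)
    then have "- u \<le> 0" by (rule Dlb)
    then show "0 \<le> u" by simp
  qed
  have "uminus ` D \<subseteq> F" using DF subneg[OF sub] by blast
  then obtain B where B: "B \<subseteq> uminus ` D" "countable B" "is_sup_in F B 0"
    using csp sup1 Dne unfolding countable_sup_property_def by blast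
  have BU: "is_sup_in UNIV B 0" using regular[OF sub od B(3)] .
  define D0 where "D0 = uminus ` B"
  have D0D: "D0 \<subseteq> D" using B(1) unfolding D0_def by auto
  have D0lb: "l \<le> 0" if "\<forall>d\<in>D0. l \<le> d" for l
  proof -
    have "\<forall>b\<in>B. b \<le> - l" using that unfolding D0_def by (auto simp: le_minus_iff)
    then have "0 \<le> - l" using BU unfolding is_sup_in_def by blast
    then show ?thesis by simp
  qed
  define ch where "ch d = (SOME c. c \<in> C \<and> c \<le> d)" for d
  have ch: "ch d \<in> C \<and> ch d \<le> d" if "d \<in> D" for d
    unfolding ch_def by (rule someI_ex) (use that in \<open>auto simp: D_def\<close>)
  show ?thesis
  proof (intro exI conjI allI impI)
    show "ch ` D0 \<subseteq> C" using ch D0D by blast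
    show "countable (ch ` D0)" using B(2) unfolding D0_def by simp
    fix l assume "\<forall>c\<in>ch ` D0. l \<le> c"
    then have "\<forall>d\<in>D0. l \<le> d" using ch D0D by (blast intro: order_trans)
    then show "l \<le> 0" by (rule D0lb)
  qed
qed

theorem theorem4p5:
  fixes F :: "'a::vector_lattice set"
  assumes "archimedean_vl TYPE('a)"
    and "vector_sublattice F"
    and "order_dense F"
    and "countable_sup_property F"
    and "majorizing F \<or> (\<exists>e. weak_unit_of F e)"
  shows "countable_sup_property (UNIV :: 'a set)"
  unfolding countable_sup_property_def
proof (intro allI impI)
  note arch = assms(1) and od = assms(3) and csp = assms(4)
  have sub: "subspace F" using assms(2) unfolding vector_sublattice_def by blast
  fix A s assume "A \<subseteq> (UNIV::'a set) \<and> A \<noteq> {} \<and> is_sup_in UNIV A s"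
  then have As: "is_sup_in UNIV A s" by blast
  define C where "C = (\<lambda>a. s - a) ` A"
  have Cpos: "0 \<le> c" if cC: "c \<in> C" for c
  proof -
    obtain a where "a \<in> A" "c = s - a" using cC unfolding C_def by blast
    moreover have "a \<le> s" using As \<open>a \<in> A\<close> unfolding is_sup_in_def by blast
    ultimately show ?thesis by simp
  qed
  have Cinf: "l \<le> 0" if "\<forall>c\<in>C. l \<le> c" for l
  proof -
    have "\<forall>a\<in>A. a \<le> s - l"
    proof
      fix a assume "a \<in> A"
      then have "l \<le> s - a" using that unfolding C_def by blast
      then show "a \<le> s - l" by (simp add: le_diff_eq add.commute)
    qed
    then have "s \<le> s - l" using As unfolding is_sup_in_def by blast
    then show ?thesis by simp
  qed
  have "\<exists>C0\<subseteq>C. countable C0 \<and> (\<forall>l. (\<forall>c\<in>C0. l \<le> c) \<longrightarrow> l \<le> 0)"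
    using assms(5)
  proof
    assume mj0: "majorizing F"
    have mj: "\<exists>f\<in>F. c \<le> f" if "c \<in> C" for c using mj0 unfolding majorizing_def by blast
    show ?thesis by (rule lemL[OF arch sub od csp Cpos mj Cinf])
  next
    assume "\<exists>e. weak_unit_of F e"
    then obtain e where e: "e \<in> F" "0 \<le> e" "\<And>x. x \<in> F \<Longrightarrow> inf (vl_abs x) e = 0 \<Longrightarrow> x = 0"
      unfolding weak_unit_of_def by blast
    define C1 where "C1 = (\<lambda>c. inf c e) ` C"
    have "\<exists>C0\<subseteq>C1. countable C0 \<and> (\<forall>l. (\<forall>c\<in>C0. l \<le> c) \<longrightarrow> l \<le> 0)"
    proof (rule lemL[OF arch sub od csp])
      show "0 \<le> c" if cC1: "c \<in> C1" for c
      proof -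
        obtain c' where "c' \<in> C" "c = inf c' e" using cC1 unfolding C1_def by blast
        moreover have "0 \<le> c'" using Cpos \<open>c' \<in> C\<close> by blast
        ultimately show ?thesis using e(2) by (simp add: le_infI)
      qed
      show "\<exists>f\<in>F. c \<le> f" if cC1: "c \<in> C1" for c
      proof
        obtain c' where "c = inf c' e" using cC1 unfolding C1_def by blast
        then show "c \<le> e" by simp
      qed (rule e(1))
      show "l \<le> 0" if "\<forall>c\<in>C1. l \<le> c" for l
      proof (rule Cinf, intro ballI)
        fix c assume "c \<in> C"
        then have "l \<le> inf c e" using that unfolding C1_def by blast
        then show "l \<le> c" by simp
      qed
    qed
    then obtain C0 where C0: "C0 \<subseteq> C1" "countable C0" "\<forall>l. (\<forall>c\<in>C0. l \<le> c) \<longrightarrow> l \<le> 0"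
      by blast
    define pr where "pr d = (SOME c. c \<in> C \<and> d = inf c e)" for d
    have pr: "pr d \<in> C \<and> d = inf (pr d) e" if "d \<in> C1" for d
      unfolding pr_def by (rule someI_ex) (use that in \<open>auto simp: C1_def\<close>)
    show ?thesis
    proof (intro exI conjI allI impI)
      show "pr ` C0 \<subseteq> C" using pr C0(1) by blast
      show "countable (pr ` C0)" using C0(2) by simp
      fix l assume lb: "\<forall>c\<in>pr ` C0. l \<le> c"
      define p where "p = sup l 0"
      have p0: "0 \<le> p" unfolding p_def by simp
      have "\<forall>d\<in>C0. inf p e \<le> d"
      proof
        fix d assume d: "d \<in> C0"
        then have "d \<in> C1" using C0(1) by blast
        have "l \<le> pr d" using lb d by blast
        moreover have "0 \<le> pr d" using Cpos pr[OF \<open>d \<in> C1\<close>] by blast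
        ultimately have "p \<le> pr d" unfolding p_def by (rule le_supI)
        then have "inf p e \<le> inf (pr d) e" by (rule inf_mono) (rule order_refl)
        then show "inf p e \<le> d" using pr[OF \<open>d \<in> C1\<close>] by simp
      qed
      then have ipe: "inf p e = 0" using C0(3) p0 e(2) by (meson antisym le_infI)
      have "p = 0"
      proof (rule ccontr)
        assume "p \<noteq> 0"
        then have "0 < p" using p0 by simp
        then obtain y where y: "y \<in> F" "0 < y" "y \<le> p" using od unfolding order_dense_def by blast
        have va: "vl_abs y = y" unfolding vl_abs_def using y(2)
          by (simp add: sup.absorb1 order_trans[of "-y" 0 y])
        have "inf y e \<le> inf p e" using y(3) by (rule inf_mono) (rule order_refl)
        moreover have "0 \<le> inf y e" using y(2) e(2) by simp
        ultimately have "inf (vl_abs y) e = 0" using ipe va by simp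
        then have "y = 0" using e(3) y(1) by blast
        then show False using y(2) by simp
      qed
      then show "l \<le> 0" unfolding p_def by (metis sup.cobounded1)
    qed
  qed
  then obtain C0 where C0: "C0 \<subseteq> C" "countable C0" "\<forall>l. (\<forall>c\<in>C0. l \<le> c) \<longrightarrow> l \<le> 0"
    by blast
  define B where "B = (\<lambda>c. s - c) ` C0"
  show "\<exists>B\<subseteq>A. countable B \<and> is_sup_in UNIV B s"
  proof (intro exI conjI)
    show "B \<subseteq> A" using C0(1) unfolding B_def C_def by auto
    show "countable B" using C0(2) unfolding B_def by simp
    show "is_sup_in UNIV B s" unfolding is_sup_in_def
    proof (intro conjI ballI allI impI)
      show "s \<in> UNIV" by simp
      fix b assume "b \<in> B"
      then obtain c where "c \<in> C0" "b = s - c" unfolding B_def by blast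
      then have "0 \<le> c" using C0(1) Cpos by blast
      then show "b \<le> s" using \<open>b = s - c\<close> by simp
    next
      fix u assume "\<forall>a\<in>B. a \<le> u"
      then have ub: "\<forall>c\<in>C0. s - c \<le> u" unfolding B_def by simp
      have "\<forall>c\<in>C0. s - u \<le> c"
      proof
        fix c assume "c \<in> C0"
        then have "s - c \<le> u" using ub by blast
        then have "s \<le> u + c" by (simp add: diff_le_eq)
        then show "s - u \<le> c" by (simp add: diff_le_eq add.commute)
      qed
      then have "s - u \<le> 0" using C0(3) by blast
      then show "s \<le> u" by simp
    qed
  qed
qed

end
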